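(* Let $R$ be a $u$-ring, let $n$ be a positive integer and let $I$ be a proper ideal of $R$. Then the following conditions are equivalent: (a) $I$ is a strongly weakly $n$-absorbing ideal of $R$; (b) $I$ is a weakly $n$-absorbing ideal of $R$; (c) for every integer $t$ with $0\leq t\leq n$, all ideals $I_1,\dots,I_t$ of $R$ and all elements $x_1,\dots,x_{n-t}\in R$ such that $x_1\cdots x_{n-t}I_1\cdots I_t\not\subseteq I$, one has $$(I:_R x_1\cdots x_{n-t}I_1\cdots I_t)=\Big[\bigcup_{i=1}^{n-t}(I:_R x_1\cdots\widehat{x_i}\cdots x_{n-t}I_1\cdots I_t)\Big]\cup\Big[\bigcup_{j=1}^{t}(I:_R x_1\cdots x_{n-t}I_1\cdots\widehat{I_j}\cdots I_t)\Big]\cup(0:_R x_1\cdots x_{n-t}I_1\cdots I_t);$$ (d) for every integer $t$ with $0\leq t\leq n$, all ideals $I_1,\dots,I_t$ of $R$ and all elements $x_1,\dots,x_{n-t}\in R$ such that $x_1\cdots x_{n-t}I_1\cdots I_t\not\subseteq I$, either $(I:_R x_1\cdots x_{n-t}I_1\cdots I_t)=(I:_R x_1\cdots\widehat{x_i}\cdots x_{n-t}I_1\cdots I_t)$ for some $1\leq i\leq n-t$, or $(I:_R x_1\cdots x_{n-t}I_1\cdots I_t)=(I:_R x_1\cdots x_{n-t}I_1\cdots\widehat{I_j}\cdots I_t)$ for some $1\leq j\leq t$, or $(I:_R x_1\cdots x_{n-t}I_1\cdots I_t)=(0:_R x_1\cdots x_{n-t}I_1\cdots I_t)$.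
   Context: All rings are commutative with $1\neq 0$. A ring $R$ is a $u$-ring if whenever an ideal of $R$ is contained in a finite union of ideals of $R$, it is contained in one of those ideals. A proper ideal $I$ of $R$ is weakly $n$-absorbing if whenever $0\neq a_1\cdots a_{n+1}\in I$ with $a_1,\dots,a_{n+1}\in R$, there are $n$ of the $a_i$'s whose product is in $I$; it is strongly weakly $n$-absorbing if whenever $0\neq I_1\cdots I_{n+1}\subseteq I$ for ideals $I_1,\dots,I_{n+1}$ of $R$, there are $n$ of the $I_i$'s whose product is contained in $I$. For an ideal (or element) $K$, $(I:_R K)=\{r\in R: rK\subseteq I\}$; $x_1\cdots x_{n-t}I_1\cdots I_t$ denotes the ideal product (elements regarded as principal ideals); a hat $\widehat{\ }$ denotes omission of that factor; an empty product is $R$. *)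

theory Defs
  imports Main
begin

text \<open>All rings are commutative with 1 distinct from 0: the ambient ring R is a type
  of class comm_ring_1 (which includes zero_neq_one).\<close>

definition is_ideal :: "'a::comm_ring_1 set \<Rightarrow> bool" where
  "is_ideal I \<longleftrightarrow> 0 \<in> I \<and> (\<forall>a\<in>I. \<forall>b\<in>I. a + b \<in> I) \<and> (\<forall>a\<in>I. -a \<in> I)
     \<and> (\<forall>r a. a \<in> I \<longrightarrow> r * a \<in> I)"

definition ideal_gen :: "'a::comm_ring_1 set \<Rightarrow> 'a set" where
  "ideal_gen S = \<Inter>{J. is_ideal J \<and> S \<subseteq> J}"

definition principal :: "'a::comm_ring_1 \<Rightarrow> 'a set" where
  "principal x = {r * x | r. True}"

definition ideal_prod :: "'a::comm_ring_1 set \<Rightarrow> 'a set \<Rightarrow> 'a set" where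
  "ideal_prod I J = ideal_gen {a * b | a b. a \<in> I \<and> b \<in> J}"

fun ideal_prod_list :: "'a::comm_ring_1 set list \<Rightarrow> 'a set" where
  "ideal_prod_list [] = UNIV"
| "ideal_prod_list (J # Js) = ideal_prod J (ideal_prod_list Js)"

definition colon :: "'a::comm_ring_1 set \<Rightarrow> 'a set \<Rightarrow> 'a set" where
  "colon I K = {r. \<forall>k\<in>K. r * k \<in> I}"

definition omit :: "nat \<Rightarrow> 'b list \<Rightarrow> 'b list" where
  "omit i xs = take i xs @ drop (Suc i) xs"

text \<open>The ideal x_1...x_{n-t} I_1...I_t, elements regarded as principal ideals.\<close>
definition mixed_prod :: "'a::comm_ring_1 list \<Rightarrow> 'a set list \<Rightarrow> 'a set" where
  "mixed_prod xs Is = ideal_prod_list (map principal xs @ Is)"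

definition u_ring :: "'a::comm_ring_1 itself \<Rightarrow> bool" where
  "u_ring _ \<longleftrightarrow> (\<forall>(J::'a set) F. is_ideal J \<and> finite F \<and> (\<forall>K\<in>F. is_ideal K) \<and> J \<subseteq> \<Union>F
      \<longrightarrow> (\<exists>K\<in>F. J \<subseteq> K))"

definition weakly_n_absorbing :: "nat \<Rightarrow> 'a::comm_ring_1 set \<Rightarrow> bool" where
  "weakly_n_absorbing n I \<longleftrightarrow> is_ideal I \<and> I \<noteq> UNIV \<and>
     (\<forall>a :: nat \<Rightarrow> 'a. (\<Prod>i\<le>n. a i) \<noteq> 0 \<and> (\<Prod>i\<le>n. a i) \<in> I
        \<longrightarrow> (\<exists>j\<le>n. (\<Prod>i\<in>{..n} - {j}. a i) \<in> I))"

definition strongly_weakly_n_absorbing :: "nat \<Rightarrow> 'a::comm_ring_1 set \<Rightarrow> bool" where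
  "strongly_weakly_n_absorbing n I \<longleftrightarrow> is_ideal I \<and> I \<noteq> UNIV \<and>
     (\<forall>Js :: 'a set list. length Js = Suc n \<and> (\<forall>J\<in>set Js. is_ideal J)
        \<and> ideal_prod_list Js \<noteq> {0} \<and> ideal_prod_list Js \<subseteq> I
        \<longrightarrow> (\<exists>j<Suc n. ideal_prod_list (omit j Js) \<subseteq> I))"

end

theory Submission
  imports Defs
begin

lemma ideal_gen_ideal: "is_ideal (ideal_gen S)"
  unfolding ideal_gen_def is_ideal_def by auto

lemma ideal_gen_sub: "S \<subseteq> ideal_gen S"
  unfolding ideal_gen_def by auto

lemma ideal_gen_least: "is_ideal J \<Longrightarrow> S \<subseteq> J \<Longrightarrow> ideal_gen S \<subseteq> J"
  unfolding ideal_gen_def by auto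

lemma ideal_prod_ideal: "is_ideal (ideal_prod A B)"
  unfolding ideal_prod_def by (rule ideal_gen_ideal)

lemma UNIV_ideal: "is_ideal (UNIV::'a::comm_ring_1 set)"
  unfolding is_ideal_def by auto

lemma zero_ideal: "is_ideal {0::'a::comm_ring_1}"
  unfolding is_ideal_def by auto

lemma ideal_prod_list_ideal: "is_ideal (ideal_prod_list L)"
  by (cases L) (auto simp: UNIV_ideal ideal_prod_ideal)

lemma ideal_prod_sub:
  assumes "is_ideal K"
  shows "ideal_prod A B \<subseteq> K \<longleftrightarrow> (\<forall>a\<in>A. \<forall>b\<in>B. a*b \<in> K)"
proof
  assume "ideal_prod A B \<subseteq> K"
  moreover have "{a * b | a b. a \<in> A \<and> b \<in> B} \<subseteq> ideal_prod A B"
    unfolding ideal_prod_def by (rule ideal_gen_sub)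
  ultimately show "\<forall>a\<in>A. \<forall>b\<in>B. a*b \<in> K" by blast
next
  assume "\<forall>a\<in>A. \<forall>b\<in>B. a*b \<in> K"
  then show "ideal_prod A B \<subseteq> K"
    unfolding ideal_prod_def using assms by (intro ideal_gen_least) auto
qed

lemma colon_ideal: "is_ideal I \<Longrightarrow> is_ideal (colon I X)"
  unfolding is_ideal_def colon_def
  by (auto simp: distrib_right mult.assoc)

lemma principal_ideal: "is_ideal (principal x)"
  unfolding is_ideal_def principal_def
  apply auto
    apply (metis mult_zero_left)
   apply (metis distrib_right)
  apply (metis minus_mult_left)
  apply (metis mult.assoc)
  done

lemma ideal_mult: "is_ideal I \<Longrightarrow> a \<in> I \<Longrightarrow> r * a \<in> I"
  unfolding is_ideal_def by auto
lemma ideal_mult2: "is_ideal I \<Longrightarrow> a \<in> I \<Longrightarrow> a * r \<in> I"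
  unfolding is_ideal_def by (metis mult.commute)
lemma ideal_zero: "is_ideal I \<Longrightarrow> 0 \<in> I"
  unfolding is_ideal_def by auto

definition sel :: "'a::comm_ring_1 set list \<Rightarrow> 'a set" where
  "sel L = {prod_list as | as. list_all2 (\<lambda>a J. a \<in> J) as L}"

lemma sel_Nil: "sel [] = {1}"
  unfolding sel_def by auto

lemma sel_Cons: "sel (J#L) = {a*s | a s. a\<in>J \<and> s \<in> sel L}"
proof (intro set_eqI iffI)
  fix x assume that: "x \<in> sel (J#L)"
  show "x \<in> {a*s | a s. a\<in>J \<and> s \<in> sel L}"
  proof -
    from that obtain z zs where "x = z * prod_list zs" "z \<in> J" "list_all2 (\<lambda>a J. a \<in> J) zs L"
      unfolding sel_def list_all2_Cons2 by auto
    then show ?thesis unfolding sel_def by blast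
  qed
next
  fix x assume "x \<in> {a*s | a s. a\<in>J \<and> s \<in> sel L}"
  then obtain a as where "x = a * prod_list as" "a \<in> J" "list_all2 (\<lambda>a J. a \<in> J) as L"
    unfolding sel_def by auto
  then show "x \<in> sel (J#L)" unfolding sel_def
    by (intro CollectI exI[of _ "a#as"]) auto
qed

lemma PL: "is_ideal K \<Longrightarrow> ideal_prod_list L \<subseteq> K \<longleftrightarrow> sel L \<subseteq> K"
proof (induction L arbitrary: K)
  case Nil
  then show ?case by (auto simp: sel_Nil dest: ideal_mult[where r=r and a=1 for r])
next
  case (Cons J L)
  have "ideal_prod_list (J#L) \<subseteq> K \<longleftrightarrow> (\<forall>a\<in>J. ideal_prod_list L \<subseteq> colon K {a})"
    using Cons.prems by (auto simp: ideal_prod_sub colon_def mult.commute)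
  also have "\<dots> \<longleftrightarrow> (\<forall>a\<in>J. sel L \<subseteq> colon K {a})"
    using Cons.IH colon_ideal Cons.prems by blast
  also have "\<dots> \<longleftrightarrow> sel (J#L) \<subseteq> K"
    by (auto simp: sel_Cons colon_def mult.commute)
  finally show ?case .
qed

lemma NZ: "ideal_prod_list L \<noteq> {0} \<longleftrightarrow> (\<exists>s\<in>sel L. s \<noteq> 0)"
proof -
  have "ideal_prod_list L \<noteq> {0} \<longleftrightarrow> \<not> ideal_prod_list L \<subseteq> {0}"
    using ideal_zero[OF ideal_prod_list_ideal[of L]] by blast
  also have "\<dots> \<longleftrightarrow> \<not> sel L \<subseteq> {0}" using PL[OF zero_ideal] by blast
  finally show ?thesis by blast
qed

lemma CL: "is_ideal I \<Longrightarrow> colon I (ideal_prod_list L) = colon I (sel L)"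
proof -
  assume I: "is_ideal I"
  have "r \<in> colon I (ideal_prod_list L) \<longleftrightarrow> r \<in> colon I (sel L)" for r
  proof -
    have "r \<in> colon I (ideal_prod_list L) \<longleftrightarrow> ideal_prod_list L \<subseteq> colon I {r}"
      by (auto simp: colon_def mult.commute)
    also have "\<dots> \<longleftrightarrow> sel L \<subseteq> colon I {r}" using PL colon_ideal I by blast
    also have "\<dots> \<longleftrightarrow> r \<in> colon I (sel L)" by (auto simp: colon_def mult.commute)
    finally show ?thesis .
  qed
  then show ?thesis by blast
qed

lemma omit_Cons0[simp]: "omit 0 (x#xs) = xs" by (simp add: omit_def)
lemma omit_Cons_Suc[simp]: "omit (Suc i) (x#xs) = x # omit i xs" by (simp add: omit_def)

lemma SE: "p < length L \<Longrightarrow> sel L = {a*s | a s. a\<in>L!p \<and> s \<in> sel (omit p L)}"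
proof (induction L arbitrary: p)
  case Nil then show ?case by simp
next
  case (Cons J L)
  show ?case
  proof (cases p)
    case 0 then show ?thesis by (simp add: sel_Cons)
  next
    case (Suc q)
    with Cons have IH: "sel L = {a*s | a s. a\<in>L!q \<and> s \<in> sel (omit q L)}" by simp
    show ?thesis using Suc
      apply (simp add: sel_Cons IH)
      apply auto
       apply (metis mult.left_commute)+
      done
  qed
qed

lemma sel_append: "sel (A @ B) = {a*b | a b. a \<in> sel A \<and> b \<in> sel B}"
proof (induction A)
  case Nil then show ?case by (simp add: sel_Nil)
next
  case (Cons J A)
  show ?case apply (simp add: sel_Cons Cons)
    apply auto
     apply (metis mult.assoc)+
    done
qed

lemma sel_principal1: "prod_list xs \<in> sel (map principal xs)"
proof (induction xs)
  case Nil then show ?case by (simp add: sel_Nil)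
next
  case (Cons x xs)
  have "x \<in> principal x" unfolding principal_def by (auto intro: exI[of _ 1])
  then show ?case using Cons by (auto simp: sel_Cons)
qed

lemma sel_principal2: "s \<in> sel (map principal xs) \<Longrightarrow> \<exists>r. s = r * prod_list xs"
proof (induction xs arbitrary: s)
  case Nil then show ?case by (simp add: sel_Nil)
next
  case (Cons x xs)
  then show ?case apply (auto simp: sel_Cons principal_def)
    by (metis mult.assoc mult.left_commute)
qed

lemma prod_list_nth: "prod_list xs = (\<Prod>i<length xs. xs!i)"
  by (induction xs) (simp_all add: prod.lessThan_Suc_shift del: prod.lessThan_Suc)

lemma prod_list_omit: "j < length xs \<Longrightarrow> prod_list (omit j xs) = (\<Prod>i\<in>{..<length xs}-{j}. xs!i)"
proof (induction xs arbitrary: j)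
  case Nil then show ?case by simp
next
  case (Cons x xs)
  show ?case
  proof (cases j)
    case 0
    have "{..<Suc (length xs)} - {0} = Suc ` {..<length xs}"
      by (auto simp: lessThan_Suc_eq_insert_0)
    then show ?thesis using 0 by (simp add: prod.reindex prod_list_nth)
  next
    case (Suc j')
    have e: "{..<Suc (length xs)} - {Suc j'} = insert 0 (Suc ` ({..<length xs} - {j'}))"
      by (auto simp: lessThan_Suc_eq_insert_0)
    have "(\<Prod>i\<in>{..<length (x#xs)}-{j}. (x#xs)!i) = x * (\<Prod>i\<in>{..<length xs}-{j'}. xs!i)"
      using Suc by (simp add: e prod.reindex)
    then show ?thesis using Suc Cons by simp
  qed
qed

lemma length_omit: "j < length xs \<Longrightarrow> length (omit j xs) = length xs - 1"
  by (simp add: omit_def)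

lemma nth_omit: "j < length xs \<Longrightarrow> i < length xs - 1 \<Longrightarrow>
   omit j xs ! i = (if i < j then xs!i else xs!Suc i)"
  by (auto simp: omit_def nth_append min_def)

lemma omit_map: "omit j (map f xs) = map f (omit j xs)"
  by (simp add: omit_def take_map drop_map)

lemma omit_append: "omit i (A@B) = (if i < length A then omit i A @ B else A @ omit (i - length A) B)"
  by (auto simp: omit_def Suc_diff_le)

lemma omit_append2: "omit (length A + j) (A@B) = A @ omit j B"
  by (simp add: omit_append)

lemma omit_update_same: "omit p (L[p:=X]) = omit p L"
  by (simp add: omit_def)

lemma omit_update_other:
  assumes "j \<noteq> p" "j < length L" "p < length L"
  shows "\<exists>q<length (omit j L). (\<forall>X. omit j (L[p:=X]) = (omit j L)[q:=X]) \<and> (omit j L)!q = L!p"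
proof -
  define q where "q = (if j < p then p - 1 else p)"
  have q: "q < length (omit j L)" using assms by (auto simp: q_def length_omit)
  have "omit j (L[p:=X]) = (omit j L)[q:=X]" for X
    apply (rule nth_equalityI)
    using assms by (auto simp: q_def length_omit nth_omit nth_list_update)
  moreover have "(omit j L)!q = L!p"
    using assms q by (auto simp: q_def length_omit nth_omit)
  ultimately show ?thesis using q by blast
qed

definition WL :: "nat \<Rightarrow> 'a::comm_ring_1 set \<Rightarrow> bool" where
  "WL n I \<longleftrightarrow> (\<forall>xs. length xs = Suc n \<and> prod_list xs \<noteq> 0 \<and> prod_list xs \<in> I
      \<longrightarrow> (\<exists>j<Suc n. prod_list (omit j xs) \<in> I))"

lemma W_iff: "weakly_n_absorbing n I \<longleftrightarrow> is_ideal I \<and> I \<noteq> UNIV \<and> WL n I"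
proof -
  have A: "(\<Prod>i\<le>n. a i) = prod_list (map a [0..<Suc n])" for a :: "nat \<Rightarrow> 'a"
    by (simp add: prod_list_nth lessThan_Suc_atMost[symmetric] del: upt_Suc)
  have B: "j \<le> n \<Longrightarrow> (\<Prod>i\<in>{..n}-{j}. a i) = prod_list (omit j (map a [0..<Suc n]))" for a :: "nat \<Rightarrow> 'a" and j
    by (subst prod_list_omit) (auto simp: lessThan_Suc_atMost[symmetric] simp del: upt_Suc intro!: prod.cong)
  have C: "length xs = Suc n \<Longrightarrow> xs = map (\<lambda>i. xs!i) [0..<Suc n]" for xs :: "'a list"
    by (metis map_nth)
  show ?thesis
  proof
    assume w: "weakly_n_absorbing n I"
    have "WL n I" unfolding WL_def
    proof (intro allI impI)
      fix xs :: "'a list" assume h: "length xs = Suc n \<and> prod_list xs \<noteq> 0 \<and> prod_list xs \<in> I"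
      then have xs: "xs = map (\<lambda>i. xs!i) [0..<Suc n]" using C by blast
      have "(\<Prod>i\<le>n. xs!i) = prod_list xs" using A[of "\<lambda>i. xs!i"] xs by metis
      then have "(\<Prod>i\<le>n. xs!i) \<noteq> 0 \<and> (\<Prod>i\<le>n. xs!i) \<in> I" using h by simp
      then obtain j where "j \<le> n" "(\<Prod>i\<in>{..n}-{j}. xs!i) \<in> I" using w unfolding weakly_n_absorbing_def by blast
      then show "\<exists>j<Suc n. prod_list (omit j xs) \<in> I" using B[of j "\<lambda>i. xs!i"] xs
        by (metis less_Suc_eq_le)
    qed
    then show "is_ideal I \<and> I \<noteq> UNIV \<and> WL n I" using w unfolding weakly_n_absorbing_def by blast
  next
    assume h: "is_ideal I \<and> I \<noteq> UNIV \<and> WL n I"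
    show "weakly_n_absorbing n I" unfolding weakly_n_absorbing_def
    proof (intro conjI allI impI)
      fix a :: "nat \<Rightarrow> 'a" assume "(\<Prod>i\<le>n. a i) \<noteq> 0 \<and> (\<Prod>i\<le>n. a i) \<in> I"
      then obtain j where "j < Suc n" "prod_list (omit j (map a [0..<Suc n])) \<in> I"
        using h unfolding WL_def A by (metis length_map length_upt minus_nat.diff_0)
      then show "\<exists>j\<le>n. (\<Prod>i\<in>{..n}-{j}. a i) \<in> I" using B by (metis less_Suc_eq_le)
    qed (use h in auto)
  qed
qed

lemma CU:
  assumes "q < length M" "is_ideal I"
  shows "sel (M[q:=X]) \<subseteq> I \<longleftrightarrow> X \<subseteq> colon I (sel (M[q:=UNIV]))"
proof -
  have e1: "sel (M[q:=X]) = {x*s | x s. x\<in>X \<and> s \<in> sel (omit q M)}"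
    using SE[of q "M[q:=X]"] assms by (simp add: omit_update_same)
  have e2: "sel (M[q:=UNIV]) = {x*s | x s. s \<in> sel (omit q M)}"
    using SE[of q "M[q:=UNIV]"] assms by (simp add: omit_update_same)
  show ?thesis
  proof
    assume h: "sel (M[q:=X]) \<subseteq> I"
    show "X \<subseteq> colon I (sel (M[q:=UNIV]))"
    proof
      fix x assume x: "x \<in> X"
      have "x * (c * s) \<in> I" if "s \<in> sel (omit q M)" for c s
      proof -
        have "x * s \<in> I" using h x that e1 by blast
        then have "c * (x * s) \<in> I" using ideal_mult assms(2) by blast
        then show ?thesis by (simp add: mult_ac)
      qed
      then show "x \<in> colon I (sel (M[q:=UNIV]))" unfolding colon_def e2 by blast
    qed
  next
    assume h: "X \<subseteq> colon I (sel (M[q:=UNIV]))"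
    show "sel (M[q:=X]) \<subseteq> I"
    proof
      fix y assume "y \<in> sel (M[q:=X])"
      then obtain x s where y: "y = x * s" "x \<in> X" "s \<in> sel (omit q M)" using e1 by blast
      have "1 * s \<in> sel (M[q:=UNIV])" using e2 y by blast
      then show "y \<in> I" using h y unfolding colon_def by auto
    qed
  qed
qed

lemma mainL:
  assumes u: "u_ring TYPE('a::comm_ring_1)" and I: "is_ideal (I::'a set)" and W: "WL n I"
  shows "length L = Suc n \<Longrightarrow> (\<forall>J\<in>set L. is_ideal J) \<Longrightarrow>
    card {p. p < length L \<and> L!p \<notin> range principal} = m \<Longrightarrow> sel L \<subseteq> I \<Longrightarrow>
    (\<exists>s\<in>sel L. s \<noteq> 0) \<Longrightarrow> \<exists>j<Suc n. sel (omit j L) \<subseteq> I"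
proof (induction m arbitrary: L)
  case 0
  have fin: "finite {p. p < length L \<and> L!p \<notin> range principal}" by simp
  with 0 have "\<forall>p<length L. L!p \<in> range principal" by auto
  then have "\<forall>J\<in>set L. \<exists>x. J = principal x" by (metis in_set_conv_nth rangeE)
  then obtain xs where L: "L = map principal xs" using ex_map_conv by metis
  have len: "length xs = Suc n" using 0 L by simp
  have pI: "prod_list xs \<in> I" using sel_principal1[of xs] 0 L by blast
  have pnz: "prod_list xs \<noteq> 0" using 0(5) sel_principal2[of _ xs] L by force
  obtain j where j: "j < Suc n" "prod_list (omit j xs) \<in> I" using W len pI pnz unfolding WL_def by blast
  have "sel (omit j L) \<subseteq> I"
  proof
    fix s assume "s \<in> sel (omit j L)"
    then obtain r where "s = r * prod_list (omit j xs)" using sel_principal2 L omit_map by metis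
    then show "s \<in> I" using ideal_mult[OF I j(2)] by simp
  qed
  then show ?case using j by blast
next
  case (Suc m)
  define S where "S = {p. p < length L \<and> L!p \<notin> range principal}"
  have finS: "finite S" unfolding S_def by simp
  have "S \<noteq> {}" using Suc.prems(3) unfolding S_def by (metis card.empty nat.distinct(1))
  then obtain p where pS: "p \<in> S" by blast
  then have p: "p < length L" "L!p \<notin> range principal" unfolding S_def by auto
  define N where "N = omit p L"
  have Lp: "is_ideal (L!p)" using Suc.prems(2) p by auto
  have selL: "sel L = {a*s | a s. a\<in>L!p \<and> s \<in> sel N}" unfolding N_def using SE p by blast
  show ?case
  proof (cases "sel N \<subseteq> I")
    case True then show ?thesis using p Suc.prems(1) N_def by auto
  next
    case False
    note notN = False
    define D where "D j = colon I (sel (omit j (L[p:=UNIV])))" for j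
    define Z where "Z = colon {0} (sel N)"
    define F where "F = insert Z (D ` ({..<Suc n} - {p}))"
    have cover: "L!p \<subseteq> \<Union>F"
    proof
      fix a assume a: "a \<in> L!p"
      show "a \<in> \<Union>F"
      proof (cases "\<forall>s\<in>sel N. a*s = 0")
        case True then have "a \<in> Z" unfolding Z_def colon_def by auto
        then show ?thesis unfolding F_def by blast
      next
        case False
        then obtain s0 where s0: "s0 \<in> sel N" "a*s0 \<noteq> 0" by blast
        define L' where "L' = L[p := principal a]"
        have aa: "a \<in> principal a" unfolding principal_def by (auto intro: exI[of _ 1])
        have selL': "sel L' = {b*s | b s. b \<in> principal a \<and> s \<in> sel N}"
          using SE[of p L'] p unfolding L'_def N_def by (simp add: omit_update_same)
        have "principal a \<subseteq> L!p" using Lp a unfolding principal_def by (auto intro: ideal_mult)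
        then have sub: "sel L' \<subseteq> I" using selL' selL Suc.prems(4) by blast
        have nz: "\<exists>s\<in>sel L'. s\<noteq>0" using selL' aa s0 by blast
        have ideals: "\<forall>J\<in>set L'. is_ideal J" unfolding L'_def using Suc.prems(2) principal_ideal
          by (metis insert_iff set_update_subset_insert subsetD)
        have "{p'. p' < length L' \<and> L'!p' \<notin> range principal} = S - {p}"
          unfolding L'_def S_def
          by (auto simp: nth_list_update split: if_splits) (metis nth_list_update_eq nth_list_update_neq rangeI)
        then have card: "card {p'. p' < length L' \<and> L'!p' \<notin> range principal} = m"
          using Suc.prems(3) finS pS S_def by simp
        have lenL': "length L' = Suc n" using Suc.prems(1) L'_def by simp
        obtain j where j: "j < Suc n" "sel (omit j L') \<subseteq> I"
          using Suc.IH[OF lenL' ideals card sub nz] by blast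
        have jp: "j \<noteq> p" using j notN unfolding L'_def N_def by (auto simp: omit_update_same)
        obtain q where q: "q < length (omit j L)" "\<forall>X. omit j (L[p:=X]) = (omit j L)[q:=X]"
          using omit_update_other[OF jp, of L] j(1) Suc.prems(1) p(1) by auto
        have "principal a \<subseteq> D j"
          using j(2) CU[OF q(1) I, of "principal a"] q(2) unfolding L'_def D_def by simp
        then have "a \<in> D j" using aa by blast
        then show ?thesis unfolding F_def using j jp by blast
      qed
    qed
    have finF: "finite F" unfolding F_def by simp
    have idF: "\<forall>K\<in>F. is_ideal K" unfolding F_def D_def Z_def using colon_ideal I zero_ideal by blast
    obtain K where K: "K \<in> F" "L!p \<subseteq> K"
      using u unfolding u_ring_def using Lp finF idF cover by blast
    show ?thesis
    proof (cases "K = Z")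
      case True
      have "sel L \<subseteq> {0}" using K True selL unfolding Z_def colon_def by auto
      then show ?thesis using Suc.prems(5) by auto
    next
      case False
      then obtain j where j: "j < Suc n" "j \<noteq> p" "K = D j" using K(1) unfolding F_def by auto
      obtain q where q: "q < length (omit j L)" "\<forall>X. omit j (L[p:=X]) = (omit j L)[q:=X]"
          "(omit j L)!q = L!p"
        using omit_update_other[OF j(2), of L] j(1) Suc.prems(1) p(1) by auto
      have e: "omit j L = (omit j L)[q := L!p]" using q(3) by (metis list_update_id)
      have "sel ((omit j L)[q := L!p]) \<subseteq> I"
        using CU[OF q(1) I, of "L!p"] K(2) j(3) q(2) unfolding D_def by simp
      then show ?thesis using e j(1) by metis
    qed
  qed
qed

lemma colon_omit_mono:
  assumes "is_ideal I" "p < length L"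
  shows "colon I (ideal_prod_list (omit p L)) \<subseteq> colon I (ideal_prod_list L)"
proof
  fix r assume "r \<in> colon I (ideal_prod_list (omit p L))"
  then have "r \<in> colon I (sel (omit p L))" using CL[OF assms(1)] by simp
  then have h: "\<forall>s\<in>sel (omit p L). s * r \<in> I" unfolding colon_def by (auto simp: mult.commute)
  have "\<forall>y\<in>sel L. y * r \<in> I"
  proof
    fix y assume "y \<in> sel L"
    then obtain a s where "y = a * s" "s \<in> sel (omit p L)" using SE[OF assms(2)] by blast
    then show "y * r \<in> I" using h ideal_mult[OF assms(1)] by (metis mult.assoc)
  qed
  then have "r \<in> colon I (sel L)" unfolding colon_def by (auto simp: mult.commute)
  then show "r \<in> colon I (ideal_prod_list L)" using CL[OF assms(1)] by simp
qed

lemma SW_to_W: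
  assumes "strongly_weakly_n_absorbing n I"
  shows "WL n I"
  unfolding WL_def
proof (intro allI impI)
  fix xs :: "'a list" assume h: "length xs = Suc n \<and> prod_list xs \<noteq> 0 \<and> prod_list xs \<in> I"
  have I: "is_ideal I" using assms unfolding strongly_weakly_n_absorbing_def by blast
  let ?Js = "map principal xs"
  have "\<exists>s\<in>sel ?Js. s \<noteq> 0" using sel_principal1[of xs] h by blast
  then have a: "ideal_prod_list ?Js \<noteq> {0}" using NZ by blast
  have "sel ?Js \<subseteq> I"
  proof
    fix s assume "s \<in> sel ?Js"
    then obtain r where "s = r * prod_list xs" using sel_principal2 by blast
    then show "s \<in> I" using h ideal_mult[OF I] by blast
  qed
  then have b: "ideal_prod_list ?Js \<subseteq> I" using PL[OF I] by blast
  have c: "\<forall>J\<in>set ?Js. is_ideal J" using principal_ideal by auto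
  have d: "length ?Js = Suc n" using h by simp
  obtain j where j: "j < Suc n" "ideal_prod_list (omit j ?Js) \<subseteq> I"
    using assms a b c d unfolding strongly_weakly_n_absorbing_def by blast
  then have "sel (map principal (omit j xs)) \<subseteq> I" using PL[OF I] by (simp add: omit_map)
  then show "\<exists>j<Suc n. prod_list (omit j xs) \<in> I" using sel_principal1 j(1) by blast
qed

lemma W_to_SW:
  assumes u: "u_ring TYPE('a::comm_ring_1)" and I: "is_ideal (I::'a set)" "I \<noteq> UNIV" and W: "WL n I"
  shows "strongly_weakly_n_absorbing n I"
  unfolding strongly_weakly_n_absorbing_def
proof (intro conjI allI impI)
  fix Js :: "'a set list"
  assume h: "length Js = Suc n \<and> (\<forall>J\<in>set Js. is_ideal J) \<and> ideal_prod_list Js \<noteq> {0} \<and> ideal_prod_list Js \<subseteq> I"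
  then have "sel Js \<subseteq> I" using PL[OF I(1)] by blast
  moreover have "\<exists>s\<in>sel Js. s \<noteq> 0" using h NZ by blast
  ultimately obtain j where "j < Suc n" "sel (omit j Js) \<subseteq> I"
    using mainL[OF u I(1) W, of Js] h by blast
  then show "\<exists>j<Suc n. ideal_prod_list (omit j Js) \<subseteq> I" using PL[OF I(1)] by blast
qed (use I in auto)

lemma SW_to_C:
  assumes SW: "strongly_weakly_n_absorbing n I"
  shows "(\<forall>t xs Is. t \<le> n \<and> length Is = t \<and> (\<forall>J\<in>set Is. is_ideal J) \<and> length xs = n - t
           \<and> \<not> mixed_prod xs Is \<subseteq> I \<longrightarrow>
           colon I (mixed_prod xs Is) =
             (\<Union>i<n - t. colon I (mixed_prod (omit i xs) Is))
             \<union> (\<Union>j<t. colon I (mixed_prod xs (omit j Is)))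
             \<union> colon {0} (mixed_prod xs Is))"
proof (intro allI impI)
  fix t xs Is
  assume h: "t \<le> n \<and> length Is = t \<and> (\<forall>J\<in>set Is. is_ideal J) \<and> length xs = n - t
           \<and> \<not> mixed_prod xs Is \<subseteq> I"
  have I: "is_ideal I" using SW unfolding strongly_weakly_n_absorbing_def by blast
  define L where "L = map principal xs @ Is"
  have M: "mixed_prod xs Is = ideal_prod_list L" unfolding L_def mixed_prod_def by simp
  have lenL: "length L = n" using h unfolding L_def by simp
  have o1: "i < n - t \<Longrightarrow> mixed_prod (omit i xs) Is = ideal_prod_list (omit i L)" for i
    using h unfolding L_def mixed_prod_def by (simp add: omit_append omit_map)
  have o2: "j < t \<Longrightarrow> mixed_prod xs (omit j Is) = ideal_prod_list (omit (length xs + j) L)" for j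
    unfolding L_def mixed_prod_def using omit_append2[of "map principal xs" j Is] by simp
  show "colon I (mixed_prod xs Is) =
             (\<Union>i<n - t. colon I (mixed_prod (omit i xs) Is))
             \<union> (\<Union>j<t. colon I (mixed_prod xs (omit j Is)))
             \<union> colon {0} (mixed_prod xs Is)"
  proof (rule equalityI)
    show "colon I (mixed_prod xs Is) \<subseteq> (\<Union>i<n - t. colon I (mixed_prod (omit i xs) Is))
             \<union> (\<Union>j<t. colon I (mixed_prod xs (omit j Is)))
             \<union> colon {0} (mixed_prod xs Is)"
    proof
      fix r assume r: "r \<in> colon I (mixed_prod xs Is)"
      then have "r \<in> colon I (sel L)" using CL[OF I] M by simp
      then have rs: "\<forall>s\<in>sel L. s * r \<in> I" unfolding colon_def by (simp add: mult.commute)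
      show "r \<in> (\<Union>i<n - t. colon I (mixed_prod (omit i xs) Is))
             \<union> (\<Union>j<t. colon I (mixed_prod xs (omit j Is)))
             \<union> colon {0} (mixed_prod xs Is)"
      proof (cases "\<forall>s\<in>sel L. s * r = 0")
        case True
        then have "r \<in> colon {0} (sel L)" unfolding colon_def by (auto simp: mult.commute)
        then have "r \<in> colon {0} (mixed_prod xs Is)" unfolding M CL[OF zero_ideal] .
        then show ?thesis by blast
      next
        case False
        then obtain s0 where s0: "s0 \<in> sel L" "s0 * r \<noteq> 0" by blast
        define Js where "Js = principal r # L"
        have rr: "r \<in> principal r" unfolding principal_def by (auto intro: exI[of _ 1])
        have selJs: "sel Js = {a*s | a s. a \<in> principal r \<and> s \<in> sel L}"
          unfolding Js_def by (simp add: sel_Cons)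
        have "r * s0 \<in> sel Js" using selJs rr s0(1) by blast
        moreover have "r * s0 \<noteq> 0" using s0(2) by (simp add: mult.commute)
        ultimately have "\<exists>s\<in>sel Js. s \<noteq> 0" by blast
        then have nz: "ideal_prod_list Js \<noteq> {0}" using NZ by blast
        have "sel Js \<subseteq> I"
        proof
          fix y assume "y \<in> sel Js"
          then obtain c s where "y = (c * r) * s" "s \<in> sel L" using selJs unfolding principal_def by blast
          moreover have "c * (s * r) \<in> I" using rs ideal_mult[OF I] \<open>s \<in> sel L\<close> by blast
          ultimately show "y \<in> I" by (simp add: mult_ac)
        qed
        then have sub: "ideal_prod_list Js \<subseteq> I" using PL[OF I] by blast
        have ids: "\<forall>J\<in>set Js. is_ideal J" unfolding Js_def L_def using h principal_ideal by auto
        have lenJs: "length Js = Suc n" unfolding Js_def using lenL by simp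
        obtain j where j: "j < Suc n" "ideal_prod_list (omit j Js) \<subseteq> I"
          using SW lenJs ids nz sub unfolding strongly_weakly_n_absorbing_def by blast
        show ?thesis
        proof (cases j)
          case 0
          then have "ideal_prod_list L \<subseteq> I" using j(2) unfolding Js_def by simp
          then show ?thesis using h M by metis
        next
          case (Suc j')
          have "ideal_prod_list (principal r # omit j' L) \<subseteq> I" using j Suc unfolding Js_def by simp
          then have "sel (principal r # omit j' L) \<subseteq> I" using PL[OF I] by blast
          then have "{a * s |a s. a \<in> principal r \<and> s \<in> sel (omit j' L)} \<subseteq> I" by (simp add: sel_Cons)
          then have "\<forall>s\<in>sel (omit j' L). r * s \<in> I" using rr by blast
          then have "\<forall>s\<in>sel (omit j' L). s * r \<in> I" by (simp add: mult.commute)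
          then have "r \<in> colon I (sel (omit j' L))" unfolding colon_def by (simp add: mult.commute)
          then have rc: "r \<in> colon I (ideal_prod_list (omit j' L))" using CL[OF I] by simp
          have j': "j' < n" using j Suc by simp
          show ?thesis
          proof (cases "j' < length xs")
            case True
            then have jt: "j' < n - t" using h by simp
            then have "r \<in> colon I (mixed_prod (omit j' xs) Is)" using o1[of j'] rc by simp
            then show ?thesis using jt by blast
          next
            case False
            then have "j' - length xs < t" "j' = length xs + (j' - length xs)" using j' h by auto
            then have "r \<in> colon I (mixed_prod xs (omit (j' - length xs) Is))"
              using o2[of "j' - length xs"] rc by simp
            then show ?thesis using \<open>j' - length xs < t\<close> by blast
          qed
        qed
      qed
    qed
  next
    have A: "colon I (mixed_prod (omit i xs) Is) \<subseteq> colon I (mixed_prod xs Is)" if "i < n - t" for i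
    proof -
      have il: "i < length L" using that lenL by simp
      show ?thesis unfolding o1[OF that] M by (rule colon_omit_mono[OF I il])
    qed
    have B: "colon I (mixed_prod xs (omit j Is)) \<subseteq> colon I (mixed_prod xs Is)" if "j < t" for j
    proof -
      have "length xs = n - t" "t \<le> n" using h by auto
      then have il: "length xs + j < length L" using that lenL by arith
      show ?thesis unfolding o2[OF that] M by (rule colon_omit_mono[OF I il])
    qed
    have C: "colon {0} (mixed_prod xs Is) \<subseteq> colon I (mixed_prod xs Is)"
      using ideal_zero[OF I] unfolding colon_def by auto
    show "(\<Union>i<n - t. colon I (mixed_prod (omit i xs) Is))
             \<union> (\<Union>j<t. colon I (mixed_prod xs (omit j Is)))
             \<union> colon {0} (mixed_prod xs Is) \<subseteq> colon I (mixed_prod xs Is)"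
      using A B C by blast
  qed
qed

lemma C_to_D:
  assumes u: "u_ring TYPE('a::comm_ring_1)" and I: "is_ideal (I::'a set)"
  and C: "(\<forall>t xs Is. t \<le> n \<and> length Is = t \<and> (\<forall>J\<in>set Is. is_ideal J) \<and> length xs = n - t
           \<and> \<not> mixed_prod xs Is \<subseteq> I \<longrightarrow>
           colon I (mixed_prod xs Is) =
             (\<Union>i<n - t. colon I (mixed_prod (omit i xs) Is))
             \<union> (\<Union>j<t. colon I (mixed_prod xs (omit j Is)))
             \<union> colon {0} (mixed_prod xs Is))"
  shows "(\<forall>t xs Is. t \<le> n \<and> length Is = t \<and> (\<forall>J\<in>set Is. is_ideal J) \<and> length xs = n - t
           \<and> \<not> mixed_prod xs Is \<subseteq> I \<longrightarrow>
           (\<exists>i<n - t. colon I (mixed_prod xs Is) = colon I (mixed_prod (omit i xs) Is))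
           \<or> (\<exists>j<t. colon I (mixed_prod xs Is) = colon I (mixed_prod xs (omit j Is)))
           \<or> colon I (mixed_prod xs Is) = colon {0} (mixed_prod xs Is))"
proof (intro allI impI)
  fix t xs and Is :: "'a set list"
  assume h: "t \<le> n \<and> length Is = t \<and> (\<forall>J\<in>set Is. is_ideal J) \<and> length xs = n - t
           \<and> \<not> mixed_prod xs Is \<subseteq> I"
  define J where "J = colon I (mixed_prod xs Is)"
  define F where "F = (\<lambda>i. colon I (mixed_prod (omit i xs) Is)) ` {..<n-t}
      \<union> (\<lambda>j. colon I (mixed_prod xs (omit j Is))) ` {..<t} \<union> {colon {0} (mixed_prod xs Is)}"
  have e1: "J = (\<Union>i<n - t. colon I (mixed_prod (omit i xs) Is))
             \<union> (\<Union>j<t. colon I (mixed_prod xs (omit j Is)))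
             \<union> colon {0} (mixed_prod xs Is)"
    unfolding J_def by (rule C[rule_format, of t Is xs]) (use h in blast)
  have e2: "\<Union>F = (\<Union>i<n - t. colon I (mixed_prod (omit i xs) Is))
             \<union> (\<Union>j<t. colon I (mixed_prod xs (omit j Is)))
             \<union> colon {0} (mixed_prod xs Is)" unfolding F_def by auto
  have eq: "J = \<Union>F" using e1 e2 by simp
  have finF: "finite F" unfolding F_def by simp
  have idF: "\<forall>K\<in>F. is_ideal K" unfolding F_def using colon_ideal I zero_ideal by blast
  have idJ: "is_ideal J" unfolding J_def using colon_ideal I by blast
  have "\<exists>K\<in>F. J \<subseteq> K"
    using u[unfolded u_ring_def, rule_format, of J F] idJ finF idF eq by blast
  then obtain K where K: "K \<in> F" "J \<subseteq> K" by blast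
  have "K \<subseteq> J" using K(1) eq by blast
  then have "J = K" using K(2) by blast
  then show "(\<exists>i<n - t. colon I (mixed_prod xs Is) = colon I (mixed_prod (omit i xs) Is))
           \<or> (\<exists>j<t. colon I (mixed_prod xs Is) = colon I (mixed_prod xs (omit j Is)))
           \<or> colon I (mixed_prod xs Is) = colon {0} (mixed_prod xs Is)"
    using K(1) unfolding F_def J_def by blast
qed

lemma D_to_W:
  assumes I: "is_ideal (I::'a::comm_ring_1 set)"
  and D: "(\<forall>t xs Is. t \<le> n \<and> length Is = t \<and> (\<forall>J\<in>set Is. is_ideal J) \<and> length xs = n - t
           \<and> \<not> mixed_prod xs Is \<subseteq> I \<longrightarrow>
           (\<exists>i<n - t. colon I (mixed_prod xs Is) = colon I (mixed_prod (omit i xs) Is))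
           \<or> (\<exists>j<t. colon I (mixed_prod xs Is) = colon I (mixed_prod xs (omit j Is)))
           \<or> colon I (mixed_prod xs Is) = colon {0} (mixed_prod xs Is))"
  shows "WL n I"
  unfolding WL_def
proof (intro allI impI)
  fix xs :: "'a list" assume h: "length xs = Suc n \<and> prod_list xs \<noteq> 0 \<and> prod_list xs \<in> I"
  then obtain x0 ys where xs: "xs = x0 # ys" by (cases xs) auto
  have lys: "length ys = n - 0" using h xs by simp
  have Mys: "mixed_prod zs [] = ideal_prod_list (map principal zs)" for zs :: "'a list"
    unfolding mixed_prod_def by simp
  have colsel: "colon K (mixed_prod zs []) = colon K (sel (map principal zs))" if "is_ideal K" for K and zs :: "'a list"
    unfolding Mys by (rule CL[OF that])
  show "\<exists>j<Suc n. prod_list (omit j xs) \<in> I"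
  proof (cases "mixed_prod ys [] \<subseteq> I")
    case True
    then have "sel (map principal ys) \<subseteq> I" using PL[OF I] Mys by metis
    then have "prod_list (omit 0 xs) \<in> I" using sel_principal1 xs by auto
    then show ?thesis by blast
  next
    case False
    have "x0 \<in> colon I (sel (map principal ys))"
      unfolding colon_def
    proof (intro CollectI ballI)
      fix k assume "k \<in> sel (map principal ys)"
      then obtain r where "k = r * prod_list ys" using sel_principal2 by blast
      moreover have "r * (x0 * prod_list ys) \<in> I" using h xs ideal_mult[OF I] by simp
      ultimately show "x0 * k \<in> I" by (simp add: mult_ac)
    qed
    then have x0: "x0 \<in> colon I (mixed_prod ys [])" using colsel[OF I] by simp
    have "(\<exists>i<n - 0. colon I (mixed_prod ys []) = colon I (mixed_prod (omit i ys) []))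
           \<or> (\<exists>j<0. colon I (mixed_prod ys []) = colon I (mixed_prod ys (omit j [])))
           \<or> colon I (mixed_prod ys []) = colon {0} (mixed_prod ys [])"
      by (rule D[rule_format, of 0 "[]" ys]) (use lys False in simp)
    then show ?thesis
    proof (elim disjE exE conjE)
      fix i assume i: "i < n - 0" and e: "colon I (mixed_prod ys []) = colon I (mixed_prod (omit i ys) [])"
      have "x0 \<in> colon I (sel (map principal (omit i ys)))" using x0 e colsel[OF I] by simp
      then have "x0 * prod_list (omit i ys) \<in> I" using sel_principal1 unfolding colon_def by blast
      then have "prod_list (omit (Suc i) xs) \<in> I" using xs by simp
      then show ?thesis using i by auto
    next
      fix j assume "j < (0::nat)" then show ?thesis by simp
    next
      assume e: "colon I (mixed_prod ys []) = colon {0} (mixed_prod ys [])"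
      have "x0 \<in> colon {0} (sel (map principal ys))" using x0 e colsel[OF zero_ideal] by simp
      then have "x0 * prod_list ys = 0" using sel_principal1 unfolding colon_def by blast
      then show ?thesis using h xs by simp
    qed
  qed
qed

theorem mainTheorem2:
  fixes I :: "'a::comm_ring_1 set" and n :: nat
  assumes "u_ring TYPE('a)"
    and "0 < n"
    and "is_ideal I" and "I \<noteq> UNIV"
  shows "(strongly_weakly_n_absorbing n I \<longleftrightarrow> weakly_n_absorbing n I)
    \<and> (weakly_n_absorbing n I \<longleftrightarrow>
        (\<forall>t xs Is. t \<le> n \<and> length Is = t \<and> (\<forall>J\<in>set Is. is_ideal J) \<and> length xs = n - t
           \<and> \<not> mixed_prod xs Is \<subseteq> I \<longrightarrow>
           colon I (mixed_prod xs Is) =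
             (\<Union>i<n - t. colon I (mixed_prod (omit i xs) Is))
             \<union> (\<Union>j<t. colon I (mixed_prod xs (omit j Is)))
             \<union> colon {0} (mixed_prod xs Is)))
    \<and> (weakly_n_absorbing n I \<longleftrightarrow>
        (\<forall>t xs Is. t \<le> n \<and> length Is = t \<and> (\<forall>J\<in>set Is. is_ideal J) \<and> length xs = n - t
           \<and> \<not> mixed_prod xs Is \<subseteq> I \<longrightarrow>
           (\<exists>i<n - t. colon I (mixed_prod xs Is) = colon I (mixed_prod (omit i xs) Is))
           \<or> (\<exists>j<t. colon I (mixed_prod xs Is) = colon I (mixed_prod xs (omit j Is)))
           \<or> colon I (mixed_prod xs Is) = colon {0} (mixed_prod xs Is)))"
proof (intro conjI iffI)
  show "strongly_weakly_n_absorbing n I \<Longrightarrow> weakly_n_absorbing n I"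
    using SW_to_W W_iff assms(3,4) by blast
  show "weakly_n_absorbing n I \<Longrightarrow> strongly_weakly_n_absorbing n I"
    using W_to_SW[OF assms(1) assms(3) assms(4)] W_iff by blast
  show "weakly_n_absorbing n I \<Longrightarrow> (\<forall>t xs Is. t \<le> n \<and> length Is = t \<and> (\<forall>J\<in>set Is. is_ideal J) \<and> length xs = n - t
           \<and> \<not> mixed_prod xs Is \<subseteq> I \<longrightarrow>
           colon I (mixed_prod xs Is) =
             (\<Union>i<n - t. colon I (mixed_prod (omit i xs) Is))
             \<union> (\<Union>j<t. colon I (mixed_prod xs (omit j Is)))
             \<union> colon {0} (mixed_prod xs Is))"
    by (rule SW_to_C, rule W_to_SW[OF assms(1) assms(3) assms(4)]) (simp add: W_iff)
  show "weakly_n_absorbing n I \<Longrightarrow> (\<forall>t xs Is. t \<le> n \<and> length Is = t \<and> (\<forall>J\<in>set Is. is_ideal J) \<and> length xs = n - t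
           \<and> \<not> mixed_prod xs Is \<subseteq> I \<longrightarrow>
           (\<exists>i<n - t. colon I (mixed_prod xs Is) = colon I (mixed_prod (omit i xs) Is))
           \<or> (\<exists>j<t. colon I (mixed_prod xs Is) = colon I (mixed_prod xs (omit j Is)))
           \<or> colon I (mixed_prod xs Is) = colon {0} (mixed_prod xs Is))"
    by (rule C_to_D[OF assms(1) assms(3)], rule SW_to_C, rule W_to_SW[OF assms(1) assms(3) assms(4)]) (simp add: W_iff)
  show "weakly_n_absorbing n I" if "(\<forall>t xs Is. t \<le> n \<and> length Is = t \<and> (\<forall>J\<in>set Is. is_ideal J) \<and> length xs = n - t
           \<and> \<not> mixed_prod xs Is \<subseteq> I \<longrightarrow>
           colon I (mixed_prod xs Is) =
             (\<Union>i<n - t. colon I (mixed_prod (omit i xs) Is))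
             \<union> (\<Union>j<t. colon I (mixed_prod xs (omit j Is)))
             \<union> colon {0} (mixed_prod xs Is))"
    using D_to_W[OF assms(3) C_to_D[OF assms(1) assms(3) that]] W_iff assms(3,4) by blast
  show "weakly_n_absorbing n I" if "(\<forall>t xs Is. t \<le> n \<and> length Is = t \<and> (\<forall>J\<in>set Is. is_ideal J) \<and> length xs = n - t
           \<and> \<not> mixed_prod xs Is \<subseteq> I \<longrightarrow>
           (\<exists>i<n - t. colon I (mixed_prod xs Is) = colon I (mixed_prod (omit i xs) Is))
           \<or> (\<exists>j<t. colon I (mixed_prod xs Is) = colon I (mixed_prod xs (omit j Is)))
           \<or> colon I (mixed_prod xs Is) = colon {0} (mixed_prod xs Is))"
    using D_to_W[OF assms(3) that] W_iff assms(3,4) by blast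
qed

end
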